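(* Let $\beta=([0]_\beta,[1]_\beta,[2]_\beta,\dots)$ be a sequence of nonnegative reals with $[0]_\beta=0$, $[1]_\beta=1$ and $[n]_\beta>0$ for $n\ge1$. If the sequence $P_n(x)=\prod_{k=0}^{n-1}(x-[k]_\beta)$ is a $\beta$-binomial sequence, then either $[n]_\beta=n$ for all $n$, or $[n]_\beta=1$ for all $n\ge1$.
   Context: Write $[n]_\beta!=\prod_{i=1}^n[i]_\beta$, $[0]_\beta!=1$. $D_\beta$ is the linear operator on $\mathbb C[x]$ with $D_\beta x^n=[n]_\beta x^{n-1}$; $\exp_\beta(z)=\sum_n z^n/[n]_\beta!$; $E^a_\beta=\exp_\beta(aD_\beta)$; $\Delta_\beta:\mathbb C[x]\to\mathbb C[x]\otimes\mathbb C[x]\cong\mathbb C[x,y]$ is $\Delta_\beta(f)(x,a)=E^a_\beta(f)(x)$, so $\Delta_\beta(x^n)=\sum_{k=0}^n\frac{[n]_\beta!}{[k]_\beta![n-k]_\beta!}x^ky^{n-k}$. A sequence $\{P_n\}$ of monic polynomials with $\deg P_n=n$ and $P_n(0)=0$ for $n\ge1$ is a $\beta$-binomial sequence if $\Delta_\beta(P_n)(x,y)=\sum_{k=0}^n\frac{[n]_\beta!}{[k]_\beta![n-k]_\beta!}P_k(x)P_{n-k}(y)$ for all $n\ge0$; equivalently, the lowering operator $A$ defined by $AP_n=[n]_\beta P_{n-1}$ ($P_{-1}=0$) commutes with $D_\beta$. *)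

theory Defs
  imports "HOL-Computational_Algebra.Polynomial"
begin

definition bfact :: "(nat \<Rightarrow> real) \<Rightarrow> nat \<Rightarrow> complex" where
  "bfact \<beta> n = (\<Prod>i=1..n. complex_of_real (\<beta> i))"

definition bbinom :: "(nat \<Rightarrow> real) \<Rightarrow> nat \<Rightarrow> nat \<Rightarrow> complex" where
  "bbinom \<beta> n k = bfact \<beta> n / (bfact \<beta> k * bfact \<beta> (n - k))"

definition Dbeta :: "(nat \<Rightarrow> real) \<Rightarrow> complex poly \<Rightarrow> complex poly" where
  "Dbeta \<beta> p = (\<Sum>i\<in>{1..degree p}. monom (complex_of_real (\<beta> i) * coeff p i) (i - 1))"

text \<open>Delta_beta(f)(x,a) = E^a_beta(f)(x) = sum_j a^j/[j]_beta! (D_beta^j f)(x);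
  the series terminates since D_beta^j f = 0 for j > deg f.  A bivariate polynomial
  over C is identified with its polynomial function on C x C.\<close>
definition Delta :: "(nat \<Rightarrow> real) \<Rightarrow> complex poly \<Rightarrow> complex \<Rightarrow> complex \<Rightarrow> complex" where
  "Delta \<beta> f x a = (\<Sum>j\<le>degree f. a ^ j / bfact \<beta> j * poly ((Dbeta \<beta> ^^ j) f) x)"

definition is_beta_binomial :: "(nat \<Rightarrow> real) \<Rightarrow> (nat \<Rightarrow> complex poly) \<Rightarrow> bool" where
  "is_beta_binomial \<beta> P \<longleftrightarrow>
     (\<forall>n. lead_coeff (P n) = 1 \<and> degree (P n) = n) \<and>
     (\<forall>n\<ge>1. poly (P n) 0 = 0) \<and>
     (\<forall>n x y. Delta \<beta> (P n) x y =
        (\<Sum>k\<le>n. bbinom \<beta> n k * poly (P k) x * poly (P (n - k)) y))"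

end

theory Submission
  imports Defs
begin

lemma coeff_Dbeta: "coeff (Dbeta \<beta> p) i = complex_of_real (\<beta> (Suc i)) * coeff p (Suc i)"
proof -
  have "coeff (Dbeta \<beta> p) i = (\<Sum>i'\<in>{1..degree p}. if i' = Suc i then complex_of_real (\<beta> i') * coeff p i' else 0)"
    unfolding Dbeta_def coeff_sum coeff_monom
    by (rule sum.cong) auto
  also have "\<dots> = complex_of_real (\<beta> (Suc i)) * coeff p (Suc i)"
    by (auto simp: coeff_eq_0)
  finally show ?thesis .
qed

lemma coeff_Dbeta_pow: "coeff ((Dbeta \<beta> ^^ j) p) i = (\<Prod>t\<in>{Suc i..i+j}. complex_of_real (\<beta> t)) * coeff p (i + j)"
proof (induction j arbitrary: i)
  case 0
  then show ?case by simp
next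
  case (Suc j)
  have "coeff ((Dbeta \<beta> ^^ Suc j) p) i = complex_of_real (\<beta> (Suc i)) * coeff ((Dbeta \<beta> ^^ j) p) (Suc i)"
    by (simp add: coeff_Dbeta)
  also have "\<dots> = complex_of_real (\<beta> (Suc i)) * (\<Prod>t\<in>{Suc (Suc i)..Suc i+j}. complex_of_real (\<beta> t)) * coeff p (i + Suc j)"
    using Suc by simp
  also have "complex_of_real (\<beta> (Suc i)) * (\<Prod>t\<in>{Suc (Suc i)..Suc i+j}. complex_of_real (\<beta> t)) = (\<Prod>t\<in>{Suc i..i+Suc j}. complex_of_real (\<beta> t))"
    by (subst prod.atLeast_Suc_atMost[of "Suc i"]) auto
  finally show ?case .
qed

lemma degree_Dbeta_pow: "degree ((Dbeta \<beta> ^^ j) p) \<le> degree p"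
  by (rule degree_le) (auto simp: coeff_Dbeta_pow coeff_eq_0)

lemma key:
  assumes "is_beta_binomial \<beta> P" "m \<le> n"
  shows "coeff ((Dbeta \<beta> ^^ m) (P n)) 1 / bfact \<beta> m
       = (\<Sum>k\<le>n. bbinom \<beta> n k * coeff (P k) 1 * coeff (P (n - k)) m)"
proof -
  have deg: "degree (P n) = n" using assms(1) unfolding is_beta_binomial_def by blast
  have eq: "\<And>x y. Delta \<beta> (P n) x y = (\<Sum>k\<le>n. bbinom \<beta> n k * poly (P k) x * poly (P (n - k)) y)"
    using assms(1) unfolding is_beta_binomial_def by blast
  have step1: "(\<Sum>j\<le>n. y ^ j / bfact \<beta> j * coeff ((Dbeta \<beta> ^^ j) (P n)) 1)
      = (\<Sum>k\<le>n. bbinom \<beta> n k * poly (P (n - k)) y * coeff (P k) 1)" for y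
  proof -
    have "poly (\<Sum>j\<le>n. smult (y ^ j / bfact \<beta> j) ((Dbeta \<beta> ^^ j) (P n)))
        = poly (\<Sum>k\<le>n. smult (bbinom \<beta> n k * poly (P (n - k)) y) (P k))"
    proof
      fix x
      show "poly (\<Sum>j\<le>n. smult (y ^ j / bfact \<beta> j) ((Dbeta \<beta> ^^ j) (P n))) x
        = poly (\<Sum>k\<le>n. smult (bbinom \<beta> n k * poly (P (n - k)) y) (P k)) x"
        using eq[of x y] unfolding Delta_def deg poly_sum poly_smult
        by (simp add: mult_ac)
    qed
    then have "(\<Sum>j\<le>n. smult (y ^ j / bfact \<beta> j) ((Dbeta \<beta> ^^ j) (P n)))
        = (\<Sum>k\<le>n. smult (bbinom \<beta> n k * poly (P (n - k)) y) (P k))"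
      by (simp add: poly_eq_poly_eq_iff)
    then have "coeff (\<Sum>j\<le>n. smult (y ^ j / bfact \<beta> j) ((Dbeta \<beta> ^^ j) (P n))) 1
        = coeff (\<Sum>k\<le>n. smult (bbinom \<beta> n k * poly (P (n - k)) y) (P k)) 1"
      by simp
    then show ?thesis unfolding coeff_sum coeff_smult .
  qed
  have "poly (\<Sum>j\<le>n. monom (coeff ((Dbeta \<beta> ^^ j) (P n)) 1 / bfact \<beta> j) j)
      = poly (\<Sum>k\<le>n. smult (bbinom \<beta> n k * coeff (P k) 1) (P (n - k)))"
  proof
    fix y
    show "poly (\<Sum>j\<le>n. monom (coeff ((Dbeta \<beta> ^^ j) (P n)) 1 / bfact \<beta> j) j) y
      = poly (\<Sum>k\<le>n. smult (bbinom \<beta> n k * coeff (P k) 1) (P (n - k))) y"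
      using step1[of y] unfolding poly_sum poly_smult poly_monom
      by (simp add: mult_ac)
  qed
  then have "(\<Sum>j\<le>n. monom (coeff ((Dbeta \<beta> ^^ j) (P n)) 1 / bfact \<beta> j) j)
      = (\<Sum>k\<le>n. smult (bbinom \<beta> n k * coeff (P k) 1) (P (n - k)))"
    by (simp add: poly_eq_poly_eq_iff)
  then have "coeff (\<Sum>j\<le>n. monom (coeff ((Dbeta \<beta> ^^ j) (P n)) 1 / bfact \<beta> j) j) m
      = coeff (\<Sum>k\<le>n. smult (bbinom \<beta> n k * coeff (P k) 1) (P (n - k))) m"
    by simp
  then show ?thesis unfolding coeff_sum coeff_smult coeff_monom
    using assms(2) by (simp add: mult_ac)
qed


definition PP :: "(nat \<Rightarrow> real) \<Rightarrow> nat \<Rightarrow> complex poly" where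
  "PP \<beta> = (\<lambda>n. \<Prod>k<n. [:- complex_of_real (\<beta> k), 1:])"

lemma PP_Suc: "PP \<beta> (Suc k) = PP \<beta> k * [:- complex_of_real (\<beta> k), 1:]"
  by (simp add: PP_def)

lemma cP_Suc: "coeff (PP \<beta> (Suc k)) (Suc j) = coeff (PP \<beta> k) j - complex_of_real (\<beta> k) * coeff (PP \<beta> k) (Suc j)"
  by (simp add: PP_Suc)

lemma cP_Suc0: "coeff (PP \<beta> (Suc k)) 0 = - complex_of_real (\<beta> k) * coeff (PP \<beta> k) 0"
  by (simp add: PP_Suc)

lemma cP_0: "PP \<beta> 0 = 1"
  by (simp add: PP_def)

lemma cP_high: "j > k \<Longrightarrow> coeff (PP \<beta> k) j = 0"
proof (induction k arbitrary: j)
  case 0 then show ?case by (simp add: cP_0 coeff_1)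
next
  case (Suc k)
  then obtain j' where "j = Suc j'" by (cases j) auto
  with Suc show ?case by (simp add: cP_Suc)
qed

lemma cP_top: "coeff (PP \<beta> k) k = 1"
  by (induction k) (auto simp: cP_0 cP_Suc cP_high)

lemma cP_zero: "\<beta> 0 = 0 \<Longrightarrow> coeff (PP \<beta> k) 0 = (if k = 0 then 1 else 0)"
  by (induction k) (auto simp: cP_0 cP_Suc0)

lemma cP_one: "\<beta> 0 = 0 \<Longrightarrow> coeff (PP \<beta> (Suc (Suc k))) 1 = - complex_of_real (\<beta> (Suc k)) * coeff (PP \<beta> (Suc k)) 1"
  by (simp add: cP_Suc[of _ _ 0, simplified] cP_zero)

lemma cP_sub: "coeff (PP \<beta> (Suc j)) j = - complex_of_real (\<Sum>i\<le>j. \<beta> i)"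
proof (induction j)
  case 0 then show ?case by (simp add: cP_Suc0 cP_0)
next
  case (Suc j)
  then show ?case by (simp add: cP_Suc cP_top)
qed

lemma bfact_Suc: "bfact \<beta> (Suc n) = bfact \<beta> n * complex_of_real (\<beta> (Suc n))"
  by (simp add: bfact_def prod.nat_ivl_Suc' mult.commute)

lemma bfact_0: "bfact \<beta> 0 = 1" by (simp add: bfact_def)

lemma bfact_nz: assumes "\<forall>n\<ge>1. \<beta> n > 0" shows "bfact \<beta> n \<noteq> 0"
proof (induction n)
  case 0 then show ?case by (simp add: bfact_0)
next
  case (Suc n)
  have "\<beta> (Suc n) > 0" using assms by simp
  with Suc show ?case by (simp add: bfact_Suc)
qed


lemma recur:
  assumes b0: "\<beta> 0 = 0" and b1: "\<beta> 1 = 1" and pos: "\<forall>n\<ge>1. \<beta> n > 0"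
    and bin: "is_beta_binomial \<beta> (PP \<beta>)" and j: "j \<ge> 1"
  shows "\<beta> (Suc j) * ((\<Sum>i\<le>j. \<beta> i) + \<beta> (Suc j))
       = \<beta> (Suc (Suc j)) * (\<Sum>i\<le>j. \<beta> i) + \<beta> (Suc (Suc j)) * \<beta> (Suc j) / \<beta> 2"
proof -
  let ?b = "\<lambda>i. complex_of_real (\<beta> i)"
  let ?U = "\<Sum>i\<le>j. \<beta> i"
  have K: "coeff ((Dbeta \<beta> ^^ j) (PP \<beta> (Suc (Suc j)))) 1 / bfact \<beta> j
       = (\<Sum>k\<le>Suc (Suc j). bbinom \<beta> (Suc (Suc j)) k * coeff (PP \<beta> k) 1 * coeff (PP \<beta> (Suc (Suc j) - k)) j)"
    using key[OF bin, of j "Suc (Suc j)"] by simp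
  have nz: "bfact \<beta> n \<noteq> 0" for n using bfact_nz[OF pos] .
  have bf1: "bfact \<beta> 1 = 1" using b1 by (simp add: bfact_def)
  have b1': "\<beta> (Suc 0) = 1" using b1 by simp
  have pr: "(\<Prod>t\<in>{Suc 1..1+j}. ?b t) = bfact \<beta> j * ?b (Suc j)"
  proof -
    have "bfact \<beta> j = (\<Prod>t\<in>{Suc 1..j}. ?b t)"
      unfolding bfact_def using j b1 by (simp add: prod.atLeast_Suc_atMost)
    moreover have "(\<Prod>t\<in>{Suc 1..1+j}. ?b t) = (\<Prod>t\<in>{Suc 1..j}. ?b t) * ?b (Suc j)"
      using j by (simp add: prod.nat_ivl_Suc' mult.commute)
    ultimately show ?thesis by simp
  qed
  have LHS: "coeff ((Dbeta \<beta> ^^ j) (PP \<beta> (Suc (Suc j)))) 1 / bfact \<beta> j = - ?b (Suc j) * complex_of_real (?U + \<beta> (Suc j))"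
  proof -
    have c: "coeff (PP \<beta> (Suc (Suc j))) (Suc j) = - complex_of_real (?U + \<beta> (Suc j))"
      using cP_sub[of \<beta> "Suc j"] by simp
    have "coeff ((Dbeta \<beta> ^^ j) (PP \<beta> (Suc (Suc j)))) 1 / bfact \<beta> j
        = (bfact \<beta> j * ?b (Suc j)) * coeff (PP \<beta> (Suc (Suc j))) (1 + j) / bfact \<beta> j"
      by (simp only: coeff_Dbeta_pow pr)
    also have "\<dots> = ?b (Suc j) * coeff (PP \<beta> (Suc (Suc j))) (Suc j)"
      using nz[of j] by simp
    also have "\<dots> = - ?b (Suc j) * complex_of_real (?U + \<beta> (Suc j))"
      by (simp only: c) (simp add: algebra_simps)
    finally show ?thesis .
  qed
  define f where "f k = bbinom \<beta> (Suc (Suc j)) k * coeff (PP \<beta> k) 1 * coeff (PP \<beta> (Suc (Suc j) - k)) j" for k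
  have "(\<Sum>k\<le>Suc (Suc j). f k) = (\<Sum>k\<in>{1,2}. f k)"
  proof (rule sum.mono_neutral_right)
    show "\<forall>i\<in>{..Suc (Suc j)} - {1, 2}. f i = 0"
    proof
      fix i assume i: "i \<in> {..Suc (Suc j)} - {1, 2}"
      show "f i = 0"
      proof (cases "i = 0")
        case True then show ?thesis by (simp add: f_def cP_0)
      next
        case False
        then have "Suc (Suc j) - i < j" using i by auto
        then show ?thesis by (simp add: f_def cP_high)
      qed
    qed
  qed auto
  also have "\<dots> = f 1 + f 2" by simp
  also have "f 1 = ?b (Suc (Suc j)) * (- complex_of_real ?U)"
    unfolding f_def bbinom_def using nz[of "Suc j"] cP_sub[of \<beta> j] cP_top[of \<beta> 1]
    by (simp add: bfact_Suc bfact_0 b1')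
  also have "f 2 = - (?b (Suc (Suc j)) * ?b (Suc j) / ?b 2)"
  proof -
    have c21: "coeff (PP \<beta> 2) 1 = -1"
      using cP_one[of \<beta> 0, OF b0] b1 cP_top[of \<beta> 1] by (simp add: numeral_2_eq_2)
    have "bfact \<beta> 2 = ?b 2" using bf1 by (simp add: numeral_2_eq_2 bfact_Suc)
    moreover have "bfact \<beta> (Suc (Suc j)) = bfact \<beta> j * ?b (Suc j) * ?b (Suc (Suc j))"
      by (simp add: bfact_Suc)
    ultimately show ?thesis
      unfolding f_def bbinom_def using nz[of j] c21 cP_top[of \<beta> j]
      by (simp add: field_simps)
  qed
  finally have R: "(\<Sum>k\<le>Suc (Suc j). f k) = ?b (Suc (Suc j)) * (- complex_of_real ?U) - ?b (Suc (Suc j)) * ?b (Suc j) / ?b 2"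
    by simp
  have "complex_of_real (\<beta> (Suc j) * (?U + \<beta> (Suc j)))
       = complex_of_real (\<beta> (Suc (Suc j)) * ?U + \<beta> (Suc (Suc j)) * \<beta> (Suc j) / \<beta> 2)"
  proof -
    have K': "coeff ((Dbeta \<beta> ^^ j) (PP \<beta> (Suc (Suc j)))) 1 / bfact \<beta> j = (\<Sum>k\<le>Suc (Suc j). f k)"
      unfolding f_def by (rule K)
    have E: "- ?b (Suc j) * complex_of_real (?U + \<beta> (Suc j)) = ?b (Suc (Suc j)) * (- complex_of_real ?U) - ?b (Suc (Suc j)) * ?b (Suc j) / ?b 2"
      using K' LHS R by simp
    show ?thesis using E by (simp add: algebra_simps)
  qed
  then show ?thesis by (simp only: of_real_eq_iff)
qed


lemma four:
  assumes b0: "\<beta> 0 = 0" and b1: "\<beta> 1 = 1" and pos: "\<forall>n\<ge>1. \<beta> n > 0"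
    and bin: "is_beta_binomial \<beta> (PP \<beta>)"
  shows "\<beta> 2 * (\<beta> 2 + \<beta> 3 * (1 + \<beta> 2)) = 2 * \<beta> 4 * \<beta> 2 + \<beta> 4 * \<beta> 3 / \<beta> 2"
proof -
  have b1': "\<beta> (Suc 0) = 1" using b1 by simp
  have p2: "\<beta> 2 > 0" "\<beta> 3 > 0" "\<beta> 4 > 0" using pos by auto
  have K: "coeff ((Dbeta \<beta> ^^ 1) (PP \<beta> 4)) 1 / bfact \<beta> 1
       = (\<Sum>k\<le>4. bbinom \<beta> 4 k * coeff (PP \<beta> k) 1 * coeff (PP \<beta> (4 - k)) 1)"
    using key[OF bin, of 1 4] by simp
  have "complex_of_real (\<beta> 2 * (\<beta> 2 + \<beta> 3 * (1 + \<beta> 2))) = complex_of_real (2 * \<beta> 4 * \<beta> 2 + \<beta> 4 * \<beta> 3 / \<beta> 2)"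
    using K p2 unfolding coeff_Dbeta_pow bbinom_def
    by (simp add: numeral_eq_Suc cP_Suc cP_Suc0 cP_0 b0 b1' bfact_Suc bfact_0 atMost_Suc field_simps coeff_1)
  then show ?thesis by (simp only: of_real_eq_iff)
qed


lemma b2_cases:
  fixes x y z :: real
  assumes x: "x > 0"
    and e1: "x * (1 + x) = 2 * y"
    and e2: "y * (1 + x + y) = z * (1 + x) + z * y / x"
    and e3: "x * (x + y * (1 + x)) = 2 * z * x + z * y / x"
  shows "x = 1 \<or> x = 2"
proof -
  have hy: "y = x * (1 + x) / 2" using e1 by simp
  have e2': "x * (y * (1 + x + y)) = x * (z * (1 + x)) + z * y"
    using e2 x by (simp add: field_simps)
  have "(1 + x) * (6 * z - x * (1 + x) * (2 + x)) * x = 0"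
    using e2' unfolding hy by (simp add: field_simps)
  then have hz: "z = x * (1 + x) * (2 + x) / 6" using x
    by (simp add: add_pos_pos)
  have e3': "x * (x * (x + y * (1 + x))) = x * (2 * z * x) + z * y"
    using e3 x by (simp add: field_simps)
  have "x * (x * ((x - 1)^2 * (x - 2))) = 0"
    using e3' unfolding hz hy by (simp add: field_simps) algebra
  then have "(x - 1)^2 * (x - 2) = 0" using x by simp
  then show ?thesis by auto
qed


lemma sum_id_real: "(\<forall>i\<le>j. \<beta> i = real i) \<Longrightarrow> (\<Sum>i\<le>j. \<beta> i) = real j * (real j + 1) / 2"
  by (induction j) (auto simp: field_simps)

lemma sum_one_real: "\<beta> 0 = 0 \<Longrightarrow> (\<forall>i. 1 \<le> i \<and> i \<le> j \<longrightarrow> \<beta> i = 1) \<Longrightarrow> (\<Sum>i\<le>j. \<beta> i) = real j"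
  by (induction j) auto

theorem lemma5p6:
  fixes \<beta> :: "nat \<Rightarrow> real"
  assumes "\<forall>n. \<beta> n \<ge> 0"
    and "\<beta> 0 = 0" and "\<beta> 1 = 1"
    and "\<forall>n\<ge>1. \<beta> n > 0"
    and "is_beta_binomial \<beta> (\<lambda>n. \<Prod>k<n. [:- complex_of_real (\<beta> k), 1:])"
  shows "(\<forall>n. \<beta> n = real n) \<or> (\<forall>n\<ge>1. \<beta> n = 1)"
proof -
  note b0 = assms(2) and b1 = assms(3) and pos = assms(4)
  have bin: "is_beta_binomial \<beta> (PP \<beta>)" using assms(5) by (simp add: PP_def)
  note R = recur[OF b0 b1 pos bin]
  have p2: "\<beta> 2 > 0" using pos by auto
  have U1: "(\<Sum>i\<le>1. \<beta> i) = 1" using b0 b1 by simp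
  have U2: "(\<Sum>i\<le>2. \<beta> i) = 1 + \<beta> 2" using b0 b1 by (simp add: numeral_2_eq_2)
  have e1: "\<beta> 2 * (1 + \<beta> 2) = 2 * \<beta> 3"
    using R[of 1] U1 p2 by (simp add: numeral_2_eq_2 numeral_3_eq_3)
  have e2: "\<beta> 3 * (1 + \<beta> 2 + \<beta> 3) = \<beta> 4 * (1 + \<beta> 2) + \<beta> 4 * \<beta> 3 / \<beta> 2"
    using R[of 2] U2 by (simp add: numeral_2_eq_2 numeral_3_eq_3 numeral_eq_Suc)
  have "\<beta> 2 = 1 \<or> \<beta> 2 = 2"
    using b2_cases[OF p2 e1 e2 four[OF b0 b1 pos bin]] .
  then show ?thesis
  proof
    assume h: "\<beta> 2 = 2"
    have "\<forall>i\<le>n. \<beta> i = real i" for n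
    proof (induction n)
      case 0 then show ?case using b0 by simp
    next
      case (Suc n)
      have "\<beta> (Suc n) = real (Suc n)"
      proof (cases "n \<le> 1")
        case True
        then have "n = 0 \<or> n = 1" by auto
        then show ?thesis using b1 h by (auto simp: numeral_2_eq_2)
      next
        case False
        then obtain j where j: "n = Suc j" "j \<ge> 1" by (cases n) auto
        have U: "(\<Sum>i\<le>j. \<beta> i) = real j * (real j + 1) / 2"
          using Suc.IH j by (intro sum_id_real) auto
        have bj: "\<beta> (Suc j) = real j + 1" using Suc.IH j by auto
        have "\<beta> (Suc j) * ((\<Sum>i\<le>j. \<beta> i) + \<beta> (Suc j))
           = \<beta> (Suc (Suc j)) * (\<Sum>i\<le>j. \<beta> i) + \<beta> (Suc (Suc j)) * \<beta> (Suc j) / \<beta> 2"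
          using R j by simp
        then have "(real j + 1) * (real j + 1) * (real j + 2) = \<beta> (Suc (Suc j)) * ((real j + 1) * (real j + 1))"
          unfolding U bj h by (simp add: field_simps)
        then have "(\<beta> (Suc (Suc j)) - (real j + 2)) * ((real j + 1) * (real j + 1)) = 0"
          by (simp add: algebra_simps)
        moreover have "(real j + 1) * (real j + 1) \<noteq> 0" by (simp add: add_pos_pos)
        ultimately have "\<beta> (Suc (Suc j)) = real j + 2" by simp
        then show ?thesis using j by simp
      qed
      then show ?case using Suc.IH le_Suc_eq by auto
    qed
    then show ?thesis by auto
  next
    assume h: "\<beta> 2 = 1"
    have "\<forall>i. 1 \<le> i \<and> i \<le> n \<longrightarrow> \<beta> i = 1" for n
    proof (induction n)
      case 0 then show ?case by simp
    next
      case (Suc n)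
      have "\<beta> (Suc n) = 1"
      proof (cases "n \<le> 1")
        case True
        then have "n = 0 \<or> n = 1" by auto
        then show ?thesis using b1 h by (auto simp: numeral_2_eq_2)
      next
        case False
        then obtain j where j: "n = Suc j" "j \<ge> 1" by (cases n) auto
        have U: "(\<Sum>i\<le>j. \<beta> i) = real j"
          using Suc.IH j b0 by (intro sum_one_real) auto
        have bj: "\<beta> (Suc j) = 1" using Suc.IH j by auto
        have "\<beta> (Suc j) * ((\<Sum>i\<le>j. \<beta> i) + \<beta> (Suc j))
           = \<beta> (Suc (Suc j)) * (\<Sum>i\<le>j. \<beta> i) + \<beta> (Suc (Suc j)) * \<beta> (Suc j) / \<beta> 2"
          using R j by simp
        then have "1 * (real j + 1) = \<beta> (Suc (Suc j)) * real j + \<beta> (Suc (Suc j)) * 1 / 1"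
          by (simp only: U bj h)
        moreover have "(\<beta> (Suc (Suc j)) - 1) * (real j + 1) = \<beta> (Suc (Suc j)) * real j + \<beta> (Suc (Suc j)) * 1 / 1 - 1 * (real j + 1)"
          by (simp add: algebra_simps)
        ultimately have "(\<beta> (Suc (Suc j)) - 1) * (real j + 1) = 0"
          by linarith
        moreover have "real j + 1 \<noteq> 0" by (simp add: add_pos_pos)
        ultimately have "\<beta> (Suc (Suc j)) = 1" by simp
        then show ?thesis using j by simp
      qed
      then show ?case using Suc.IH le_Suc_eq by auto
    qed
    then show ?thesis by auto
  qed
qed

end
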